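(* Let $D$ be a knot diagram and $B$ an over-bridge or under-bridge of $D$, and let $D^\circ_B$ be the knotoid diagram obtained by removing the interior of $B$ from $D$. Then $g(D)\ge g(D^\circ_B)$.
   Context: A knot diagram is a generic immersion of an oriented circle in $\mathbb{R}^2$ whose only singularities are finitely many transverse double points (crossings), each with over/under information. The genus $g(D)$ of a knot diagram is the genus of the canonical Seifert surface from Seifert's algorithm: smooth each crossing in the orientation-respecting way to get disjoint embedded circles (Seifert circles), fill them with disjoint disks, and attach a half-twisted band at each crossing; equivalently $g(D)=(n-s_D+1)/2$ with $n$ the number of crossings and $s_D$ the number of Seifert circles. An over-bridge (resp. under-bridge) of length $k\ge1$ of $D$ is a sub-arc $B$ of $D$, with endpoints not at crossings, whose interior passes through exactly $k$ crossings, passing over (resp. under) at each. A knotoid diagram is a generic immersion $f:[0,1]\to\mathbb{R}^2$ with only transverse double points, each with over/under data. Its canonical surface: draw it in $\mathbb{R}^2\times\{0\}\subset\mathbb{R}^3$, orient it, smooth every crossing in the orientation-respecting way, obtaining disjoint embedded Seifert circles and one embedded interval $J$ (the Seifert interval) with the same endpoints as the diagram; fill the Seifert circles with disjoint disks lying above $\mathbb{R}^2\times\{0\}$, take a band $J\times[0,1]$ lying below $\mathbb{R}^2\times\{0\}$ meeting it in $J\times\{0\}$, and attach a half-twisted band at each crossing. The genus of a knotoid diagram is the genus of this surface (which has one boundary component). *)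

theory Defs
  imports Main "HOL.Real"
begin

text \<open>
  A knot diagram with n crossings is encoded by its Gauss data:
  the 2n crossing visits met when travelling once around the oriented circle are
  numbered 0, ..., 2n-1 (cyclically, in the order of travel); partner i is the other
  visit of the same crossing; over i says whether the strand passes over at visit i;
  lr i says whether, walking along the strand at visit i, the other strand crosses
  from right to left (this fixes the cyclic order of the four half-edges at the crossing,
  i.e. the rotation system of the underlying 4-valent plane graph).
  Edge e (e < 2n) is the arc of the diagram from visit e to visit (e+1) mod 2n.
\<close>

record gauss_diagram =
  glen    :: nat
  partner :: "nat \<Rightarrow> nat"
  over    :: "nat \<Rightarrow> bool"
  lr      :: "nat \<Rightarrow> bool"

definition num_orbits :: "('a \<Rightarrow> 'a) \<Rightarrow> 'a set \<Rightarrow> nat" where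
  "num_orbits f S = card ((\<lambda>x. {(f ^^ k) x | k. True}) ` S)"

definition pairing :: "nat \<Rightarrow> (nat \<Rightarrow> nat) \<Rightarrow> bool" where
  "pairing N p \<longleftrightarrow> (\<forall>i<N. p i < N \<and> p i \<noteq> i \<and> p (p i) = i)"

text \<open>Half-edges at crossings: Out i = start of edge i at visit i,
  In i = end of edge (i-1) mod N at visit i.  Darts: edges traversed forwards/backwards.\<close>
datatype hedge = Out nat | In nat
datatype dart = Fwd nat | Bwd nat

text \<open>Next half-edge counterclockwise around the crossing.\<close>
fun next_he :: "gauss_diagram \<Rightarrow> hedge \<Rightarrow> hedge" where
  "next_he D (Out i) = (if lr D i then Out (partner D i) else In (partner D i))"
| "next_he D (In i) = (if lr D i then In (partner D i) else Out (partner D i))"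

fun arr_he :: "nat \<Rightarrow> dart \<Rightarrow> hedge" where
  "arr_he N (Fwd e) = In (Suc e mod N)"
| "arr_he N (Bwd e) = Out e"

fun leave_dart :: "nat \<Rightarrow> hedge \<Rightarrow> dart" where
  "leave_dart N (Out k) = Fwd k"
| "leave_dart N (In k) = Bwd ((k + N - 1) mod N)"

text \<open>Face-tracing permutation of the underlying 4-valent map.\<close>
definition face_step :: "gauss_diagram \<Rightarrow> dart \<Rightarrow> dart" where
  "face_step D d = leave_dart (glen D) (next_he D (arr_he (glen D) d))"

definition num_faces :: "gauss_diagram \<Rightarrow> nat" where
  "num_faces D = num_orbits (face_step D)
     ({Fwd e | e. e < glen D} \<union> {Bwd e | e. e < glen D})"

text \<open>Well-formed Gauss data which is realised by a diagram in the plane: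
  the 4-valent map (n vertices, 2n edges, connected) embeds in the sphere,
  i.e. has n + 2 faces (Euler's formula); the crossing-free diagram is a round circle.\<close>
definition knot_diagram :: "gauss_diagram \<Rightarrow> bool" where
  "knot_diagram D \<longleftrightarrow>
     pairing (glen D) (partner D) \<and>
     (\<forall>i < glen D. over D (partner D i) = (\<not> over D i)) \<and>
     (\<forall>i < glen D. lr D (partner D i) = (\<not> lr D i)) \<and>
     (glen D = 0 \<or> num_faces D = glen D div 2 + 2)"

definition crossings :: "gauss_diagram \<Rightarrow> nat" where
  "crossings D = glen D div 2"

text \<open>Seifert circles: after the oriented smoothing, the end of edge e (at visit (e+1) mod N)
  continues into the outgoing edge of the other visit of the same crossing.\<close>
definition seifert_step :: "gauss_diagram \<Rightarrow> nat \<Rightarrow> nat" where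
  "seifert_step D e = partner D (Suc e mod glen D)"

definition seifert_circles :: "gauss_diagram \<Rightarrow> nat" where
  "seifert_circles D =
     (if glen D = 0 then 1 else num_orbits (seifert_step D) {0..<glen D})"

definition knot_genus :: "gauss_diagram \<Rightarrow> real" where
  "knot_genus D = (real (crossings D) - real (seifert_circles D) + 1) / 2"

text \<open>Knotoid diagrams: visits 0..M-1 along the oriented interval, partner, over/under.
  Edge e (0 \<le> e \<le> M) ends at visit e (or at the head if e = M); edge 0 starts at the tail.\<close>
record knotoid_diagram =
  klen     :: nat
  kpartner :: "nat \<Rightarrow> nat"
  kover    :: "nat \<Rightarrow> bool"

text \<open>Oriented smoothing: edge e (e < M) continues into edge kpartner e + 1.
  Closing the Seifert interval up (head edge M followed by tail edge 0) turns it into one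
  extra cycle, so the Seifert circles are all cycles but that one.\<close>
definition kseifert_step :: "knotoid_diagram \<Rightarrow> nat \<Rightarrow> nat" where
  "kseifert_step K e = (if e < klen K then Suc (kpartner K e) else 0)"

definition kseifert_circles :: "knotoid_diagram \<Rightarrow> nat" where
  "kseifert_circles K = num_orbits (kseifert_step K) {0..klen K} - 1"

text \<open>Canonical surface: s disks, one band along the Seifert interval, n half-twisted
  bands; Euler characteristic s + 1 - n, one boundary component, so genus (n - s)/2.\<close>
definition knotoid_genus :: "knotoid_diagram \<Rightarrow> real" where
  "knotoid_genus K = (real (klen K div 2) - real (kseifert_circles K)) / 2"

text \<open>A bridge: the sub-arc starting on edge (a-1) mod N, passing through the k consecutive
  visits a, a+1, ..., a+k-1 (mod N) and ending on edge (a+k-1) mod N.\<close>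
definition bridge_set :: "gauss_diagram \<Rightarrow> nat \<Rightarrow> nat \<Rightarrow> nat set" where
  "bridge_set D a k = {(a + t) mod glen D | t. t < k}"

definition over_bridge :: "gauss_diagram \<Rightarrow> nat \<Rightarrow> nat \<Rightarrow> bool" where
  "over_bridge D a k \<longleftrightarrow> 1 \<le> k \<and> k < glen D \<and> a < glen D \<and>
     (\<forall>t<k. over D ((a + t) mod glen D))"

definition under_bridge :: "gauss_diagram \<Rightarrow> nat \<Rightarrow> nat \<Rightarrow> bool" where
  "under_bridge D a k \<longleftrightarrow> 1 \<le> k \<and> k < glen D \<and> a < glen D \<and>
     (\<forall>t<k. \<not> over D ((a + t) mod glen D))"

text \<open>Removing the interior of the bridge: the remaining arc runs from the end of the bridge
  (tail) to its start (head), through the visits a+k, ..., a-1 (mod N), except that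
  the crossings met by the bridge disappear.\<close>
definition remaining_visits :: "gauss_diagram \<Rightarrow> nat \<Rightarrow> nat \<Rightarrow> nat list" where
  "remaining_visits D a k =
     filter (\<lambda>i. partner D i \<notin> bridge_set D a k)
       (map (\<lambda>t. (a + k + t) mod glen D) [0..<glen D - k])"

definition remove_bridge :: "gauss_diagram \<Rightarrow> nat \<Rightarrow> nat \<Rightarrow> knotoid_diagram" where
  "remove_bridge D a k =
     (let L = remaining_visits D a k in
      \<lparr> klen = length L,
        kpartner = (\<lambda>m. THE m'. m' < length L \<and> L ! m' = partner D (L ! m)),
        kover = (\<lambda>m. over D (L ! m)) \<rparr>)"

end

theory Submission
  imports Defs
begin

definition orb :: "('a \<Rightarrow> 'a) \<Rightarrow> 'a \<Rightarrow> 'a set" where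
  "orb f x = {(f ^^ k) x | k. True}"

lemma num_orbits_orb: "num_orbits f S = card (orb f ` S)"
  unfolding num_orbits_def orb_def by simp

definition perm_on :: "('a \<Rightarrow> 'a) \<Rightarrow> 'a set \<Rightarrow> bool" where
  "perm_on f S \<longleftrightarrow> (\<forall>x\<in>S. f x \<in> S) \<and> inj_on f S"

definition sw :: "'a \<Rightarrow> 'a \<Rightarrow> 'a \<Rightarrow> 'a" where
  "sw a b x = (if x = a then b else if x = b then a else x)"

lemma orb_self: "x \<in> orb f x"
  unfolding orb_def by (auto intro: exI[of _ 0])

lemma orb_funpow: "(f ^^ n) x \<in> orb f x"
  unfolding orb_def by blast

lemma orb_step: "f x \<in> orb f x"
  using orb_funpow[of 1 f x] by simp

lemma orb_sub: "y \<in> orb f x \<Longrightarrow> orb f y \<subseteq> orb f x"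
proof
  fix z assume y: "y \<in> orb f x" and z: "z \<in> orb f y"
  obtain m where m: "y = (f^^m) x" using y unfolding orb_def by blast
  obtain n where n: "z = (f^^n) y" using z unfolding orb_def by blast
  note m n
  then have "z = (f^^(n+m)) x" by (simp add: funpow_add)
  then show "z \<in> orb f x" by (simp add: orb_funpow)
qed

lemma orb_trans: assumes "y \<in> orb f x" "z \<in> orb f y" shows "z \<in> orb f x"
  using orb_sub[OF assms(1)] assms(2) by (rule subsetD)

lemma funpow_in: assumes "\<forall>x\<in>S. f x \<in> S" "x \<in> S" shows "(f^^n) x \<in> S"
proof (induction n)
  case 0 then show ?case using assms(2) by simp
next
  case (Suc n) then show ?case using assms(1) by simp
qed

lemma inj_on_funpow': "perm_on f S \<Longrightarrow> inj_on (f^^n) S"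
proof (induction n)
  case 0 then show ?case by simp
next
  case (Suc n)
  have "inj_on (f \<circ> (f^^n)) S"
    apply (rule comp_inj_on)
    using Suc unfolding perm_on_def by (auto intro: inj_on_subset funpow_in)
  then show ?case by (simp add: comp_def)
qed

lemma periodic:
  assumes "finite S" "perm_on f S" "x \<in> S"
  shows "\<exists>n>0. (f^^n) x = x"
proof -
  have sub: "(\<lambda>i. (f^^i) x) ` {0..card S} \<subseteq> S"
  proof (rule image_subsetI)
    fix i show "(f^^i) x \<in> S" using funpow_in[of S f x i] assms unfolding perm_on_def by blast
  qed
  have "\<not> inj_on (\<lambda>i. (f^^i) x) {0..card S}"
  proof
    assume "inj_on (\<lambda>i. (f^^i) x) {0..card S}"
    then have "card ((\<lambda>i. (f^^i) x) ` {0..card S}) = card S + 1"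
      by (simp add: card_image)
    moreover have "card ((\<lambda>i. (f^^i) x) ` {0..card S}) \<le> card S"
      using sub assms(1) card_mono by blast
    ultimately show False by simp
  qed
  then obtain i j where ij: "i \<noteq> j" "(f^^i) x = (f^^j) x"
    unfolding inj_on_def by auto
  have "\<exists>i j. i < j \<and> (f^^i) x = (f^^j) x"
  proof (cases "i < j")
    case True then show ?thesis using ij by blast
  next
    case False then have "j < i" using ij(1) by simp
    then show ?thesis using ij by (intro exI[of _ j] exI[of _ i]) simp
  qed
  then obtain i j where ij2: "i < j" "(f^^i) x = (f^^j) x" by blast
  have "(f^^j) x = (f^^(i + (j-i))) x" using ij2(1) by simp
  also have "\<dots> = (f^^i) ((f^^(j-i)) x)" by (simp add: funpow_add)
  finally have "(f^^j) x = (f^^i) ((f^^(j-i)) x)" .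
  then have "(f^^i) x = (f^^i) ((f^^(j-i)) x)" using ij2 by simp
  moreover have "(f^^(j-i)) x \<in> S" using funpow_in[of S f x "j-i"] assms unfolding perm_on_def by blast
  ultimately have "x = (f^^(j-i)) x"
    using inj_on_funpow'[OF assms(2), of i] assms(3) unfolding inj_on_def by blast
  then show ?thesis using ij2(1) by (intro exI[of _ "j-i"]) auto
qed

lemma funpow_mult_period: assumes "(f^^n) x = x" shows "(f^^(n*q)) x = x"
proof (induction q)
  case 0 then show ?case by simp
next
  case (Suc q)
  have "n * Suc q = n + n * q" by simp
  then have "(f^^(n * Suc q)) x = (f^^n) ((f^^(n*q)) x)"
    by (simp only: funpow_add comp_apply)
  then show ?case using Suc assms by simp
qed

lemma orb_eq:
  assumes "finite S" "perm_on f S" "x \<in> S" "y \<in> orb f x"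
  shows "orb f y = orb f x"
proof
  show "orb f y \<subseteq> orb f x" by (rule orb_sub[OF assms(4)])
  obtain n where n: "n > 0" "(f^^n) x = x" using periodic[OF assms(1-3)] by blast
  obtain m where m: "y = (f^^m) x" using assms(4) unfolding orb_def by blast
  have p: "(f^^(n*(m+1))) x = x" using funpow_mult_period[OF n(2)] by blast
  have ge: "n*(m+1) \<ge> m + 1" using n(1) by (metis One_nat_def Suc_leI mult_le_mono1 mult_1)
  define r where "r = n*(m+1) - m"
  have r: "r + m = n*(m+1)" using ge unfolding r_def by simp
  have "(f^^r) y = (f^^(r + m)) x"
    using m by (simp only: funpow_add comp_apply)
  also have "\<dots> = x" using r p by simp
  finally have "x \<in> orb f y" using orb_funpow[of r f y] by simp
  then show "orb f x \<subseteq> orb f y" by (rule orb_sub)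
qed

lemma sw_perm:
  assumes "perm_on f S" "a \<in> S" "b \<in> S"
  shows "perm_on (sw a b \<circ> f) S"
proof -
  have inv: "sw a b (sw a b x) = x" for x unfolding sw_def by auto
  have "inj (sw a b)" by (metis inv injI)
  then have "inj_on (sw a b \<circ> f) S"
    using assms(1) unfolding perm_on_def by (meson comp_inj_on inj_on_subset subset_UNIV)
  moreover have "\<forall>x\<in>S. (sw a b \<circ> f) x \<in> S"
    using assms unfolding perm_on_def sw_def by auto
  ultimately show ?thesis unfolding perm_on_def by blast
qed

lemma swap_orbits:
  assumes fin: "finite S" and pf: "perm_on f S" and a: "a \<in> S" and b: "b \<in> S"
  shows "num_orbits f S \<le> num_orbits (sw a b \<circ> f) S + 1"
proof -
  let ?g = "sw a b \<circ> f"
  have pg: "perm_on ?g S" by (rule sw_perm[OF pf a b])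
  let ?O = "orb f ` S" and ?O' = "orb ?g ` S"
  have sub: "?O - {orb f a, orb f b} \<subseteq> ?O' - {orb ?g a}"
  proof
    fix C assume C: "C \<in> ?O - {orb f a, orb f b}"
    then obtain x where x: "x \<in> S" "C = orb f x" by auto
    have na: "a \<notin> C"
    proof
      assume "a \<in> C" then have "a \<in> orb f x" using x(2) by simp
      then have "orb f a = C" using orb_eq[OF fin pf x(1) \<open>a \<in> orb f x\<close>] x(2) by simp
      then show False using C by simp
    qed
    have nb: "b \<notin> C"
    proof
      assume "b \<in> C" then have "b \<in> orb f x" using x(2) by simp
      then have "orb f b = C" using orb_eq[OF fin pf x(1) \<open>b \<in> orb f x\<close>] x(2) by simp
      then show False using C by simp
    qed
    have eq: "(?g^^n) x = (f^^n) x" for n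
    proof (induction n)
      case 0 then show ?case by simp
    next
      case (Suc n)
      have "f ((f^^n) x) \<in> C" using x(2) orb_funpow[of "Suc n" f x] by simp
      then have "f ((f^^n) x) \<noteq> a" "f ((f^^n) x) \<noteq> b" using na nb by auto
      then show ?case using Suc by (simp add: sw_def)
    qed
    have "orb ?g x = C" unfolding x(2) orb_def using eq by simp
    moreover have "a \<in> orb ?g a" by (rule orb_self)
    ultimately show "C \<in> ?O' - {orb ?g a}" using x(1) na by auto
  qed
  have "card ?O \<le> card (?O - {orb f a, orb f b}) + 2"
  proof -
    have "?O \<subseteq> (?O - {orb f a, orb f b}) \<union> {orb f a, orb f b}" by blast
    then have "card ?O \<le> card ((?O - {orb f a, orb f b}) \<union> {orb f a, orb f b})"
      using fin by (intro card_mono) auto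
    also have "\<dots> \<le> card (?O - {orb f a, orb f b}) + card {orb f a, orb f b}"
      by (rule card_Un_le)
    also have "\<dots> \<le> card (?O - {orb f a, orb f b}) + 2"
      by (simp add: card_insert_le_m1)
    finally show ?thesis .
  qed
  also have "\<dots> \<le> card (?O' - {orb ?g a}) + 2"
    using sub fin by (simp add: card_mono)
  also have "\<dots> = card ?O' - 1 + 2"
    using a fin by (simp add: card_Diff_singleton)
  also have "\<dots> = card ?O' + 1"
  proof -
    have "card ?O' > 0" using a fin by (auto simp: card_gt_0_iff)
    then show ?thesis by simp
  qed
  finally show ?thesis by (simp add: num_orbits_orb)
qed

lemma card_factor:
  assumes "finite T" "\<forall>t\<in>T. \<forall>t'\<in>T. f t = f t' \<longrightarrow> h t = h t'"
  shows "card (h ` T) \<le> card (f ` T)"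
proof -
  define G where "G C = h (SOME t. t \<in> T \<and> f t = C)" for C
  have "h ` T = G ` (f ` T)"
  proof -
    have "G (f t) = h t" if "t \<in> T" for t
    proof -
      let ?t' = "SOME t'. t' \<in> T \<and> f t' = f t"
      have st: "?t' \<in> T \<and> f ?t' = f t"
        by (rule someI[of _ t]) (use that in simp)
      then have "h ?t' = h t" using assms(2) that by blast
      then show ?thesis unfolding G_def by simp
    qed
    then show ?thesis by (force simp: image_image)
  qed
  then show ?thesis using assms(1) by (simp add: card_image_le)
qed

lemma induced:
  assumes fin: "finite S" and pg: "perm_on g S" and finT: "finite T"
    and kT: "\<forall>t\<in>T. kst t \<in> T" and phiS: "\<forall>t\<in>T. \<phi> t \<in> S"
    and step: "\<forall>t\<in>T. \<phi> (kst t) \<in> orb g (\<phi> t)"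
    and surj: "\<forall>x\<in>S. \<exists>t\<in>T. \<phi> t \<in> orb g x"
  shows "num_orbits g S \<le> num_orbits kst T"
proof -
  have e1: "orb g ` S = (\<lambda>t. orb g (\<phi> t)) ` T"
  proof
    show "orb g ` S \<subseteq> (\<lambda>t. orb g (\<phi> t)) ` T"
    proof
      fix C assume "C \<in> orb g ` S"
      then obtain x where x: "x \<in> S" "C = orb g x" by auto
      then obtain t where t: "t \<in> T" "\<phi> t \<in> orb g x" using surj by blast
      then have "orb g (\<phi> t) = C" using orb_eq[OF fin pg x(1) t(2)] x(2) by simp
      then show "C \<in> (\<lambda>t. orb g (\<phi> t)) ` T" using \<open>t \<in> T\<close> by (simp add: rev_image_eqI)
    qed
    show "(\<lambda>t. orb g (\<phi> t)) ` T \<subseteq> orb g ` S" using phiS by auto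
  qed
  have it: "\<phi> ((kst^^n) t) \<in> orb g (\<phi> t)" if "t \<in> T" for t n
  proof (induction n)
    case 0 then show ?case by (simp add: orb_self)
  next
    case (Suc n)
    have "(kst^^n) t \<in> T" using funpow_in[of T kst t n] kT that by blast
    then have "\<phi> (kst ((kst^^n) t)) \<in> orb g (\<phi> ((kst^^n) t))" using step by blast
    then show ?case using Suc orb_trans by fastforce
  qed
  have "card ((\<lambda>t. orb g (\<phi> t)) ` T) \<le> card (orb kst ` T)"
  proof (rule card_factor[OF finT], intro ballI impI)
    fix t t' assume t: "t \<in> T" "t' \<in> T" "orb kst t = orb kst t'"
    then have "t' \<in> orb kst t" using orb_self[of t' kst] by simp
    then obtain n where "t' = (kst^^n) t" unfolding orb_def by blast
    then have a1: "\<phi> t' \<in> orb g (\<phi> t)" using it t(1) by simp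
    have a2: "\<phi> t \<in> S" using phiS t by blast
    have "orb g (\<phi> t') = orb g (\<phi> t)" by (rule orb_eq[OF fin pg a2 a1])
    then show "orb g (\<phi> t) = orb g (\<phi> t')" by simp
  qed
  then show ?thesis using e1 by (simp add: num_orbits_orb)
qed



lemma mod_inj: assumes "(x::nat) < N" "y < N" "(a + x) mod N = (a + y) mod N" shows "x = y"
proof (rule ccontr)
  assume ne: "x \<noteq> y"
  { fix x y :: nat assume l: "x < y" "y < N" "(a + x) mod N = (a + y) mod N"
    then have "N dvd (a + y) - (a + x)" using mod_eq_dvd_iff_nat[of "a+x" "a+y" N] by simp
    then have "N dvd y - x" by simp
    moreover have "0 < y - x" using l by simp
    ultimately have "N \<le> y - x" by (rule dvd_imp_le)
    then have False using l by simp
  }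
  then show False using assms ne by (metis linorder_neqE_nat)
qed

locale kd =
  fixes D :: gauss_diagram
  assumes pair: "pairing (glen D) (partner D)" and Npos: "0 < glen D"
begin

definition gX :: "nat set \<Rightarrow> nat \<Rightarrow> nat" where
  "gX X e = (if Suc e mod glen D \<in> X then Suc e mod glen D else partner D (Suc e mod glen D))"

lemma p_lt: "i < glen D \<Longrightarrow> partner D i < glen D"
  using pair unfolding pairing_def by blast
lemma p_ne: "i < glen D \<Longrightarrow> partner D i \<noteq> i"
  using pair unfolding pairing_def by blast
lemma p_p: "i < glen D \<Longrightarrow> partner D (partner D i) = i"
  using pair unfolding pairing_def by blast

lemma nxt_lt: "Suc e mod glen D < glen D"
  using Npos by simp

lemma nxt_inj: "e < glen D \<Longrightarrow> e' < glen D \<Longrightarrow> Suc e mod glen D = Suc e' mod glen D \<Longrightarrow> e = e'"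
  using mod_inj[of e "glen D" e' 1] by simp

lemma g_empty: "gX {} = seifert_step D"
  unfolding gX_def seifert_step_def by auto

lemma g_perm:
  assumes X: "X \<subseteq> {0..<glen D}" and cl: "\<forall>x\<in>X. partner D x \<in> X"
  shows "perm_on (gX X) {0..<glen D}"
  unfolding perm_on_def
proof
  show "\<forall>x\<in>{0..<glen D}. gX X x \<in> {0..<glen D}"
  proof
    fix x assume "x \<in> {0..<glen D}"
    have "Suc x mod glen D < glen D" by (rule nxt_lt)
    then show "gX X x \<in> {0..<glen D}" unfolding gX_def using p_lt[of "Suc x mod glen D"] by simp
  qed
  show "inj_on (gX X) {0..<glen D}"
  proof (rule inj_onI)
    fix e e' assume e: "e \<in> {0..<glen D}" "e' \<in> {0..<glen D}" and eq: "gX X e = gX X e'"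
    define v where "v = Suc e mod glen D"
    define v' where "v' = Suc e' mod glen D"
    have vl: "v < glen D" "v' < glen D" unfolding v_def v'_def using nxt_lt by auto
    have gv: "gX X e = (if v \<in> X then v else partner D v)" unfolding gX_def v_def by simp
    have gv': "gX X e' = (if v' \<in> X then v' else partner D v')" unfolding gX_def v'_def by simp
    have eq2: "(if v \<in> X then v else partner D v) = (if v' \<in> X then v' else partner D v')"
      using eq gv gv' by simp
    have "v = v'"
    proof (cases "v \<in> X")
      case True
      show ?thesis
      proof (cases "v' \<in> X")
        case True then show ?thesis using \<open>v \<in> X\<close> eq2 by simp
      next
        case False
        then have "v = partner D v'" using \<open>v \<in> X\<close> eq2 by simp
        then have "partner D v = v'" using p_p[OF vl(2)] by simp
        moreover have "partner D v \<in> X" using cl True by blast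
        ultimately show ?thesis using False by simp
      qed
    next
      case False
      show ?thesis
      proof (cases "v' \<in> X")
        case True
        then have "v' = partner D v" using \<open>v \<notin> X\<close> eq2 by simp
        then have "partner D v' = v" using p_p[OF vl(1)] by simp
        moreover have "partner D v' \<in> X" using cl True by blast
        ultimately show ?thesis using \<open>v \<notin> X\<close> by simp
      next
        case False
        then have "partner D v = partner D v'" using \<open>v \<notin> X\<close> eq2 by simp
        then have "partner D (partner D v) = partner D (partner D v')" by simp
        then show ?thesis using p_p[OF vl(1)] p_p[OF vl(2)] by simp
      qed
    qed
    then have "Suc e mod glen D = Suc e' mod glen D" unfolding v_def v'_def .
    then show "e = e'" using nxt_inj[of e e'] e by simp
  qed
qed

lemma g_sw:
  assumes X: "X \<subseteq> {0..<glen D}" and cl: "\<forall>x\<in>X. partner D x \<in> X" and u: "u \<in> X"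
  shows "gX X = sw u (partner D u) \<circ> gX (X - {u, partner D u})"
proof
  fix e
  define v where "v = Suc e mod glen D"
  have vl: "v < glen D" unfolding v_def using nxt_lt by auto
  have gv: "gX Y e = (if v \<in> Y then v else partner D v)" for Y unfolding gX_def v_def by simp
  have ul: "u < glen D" using u X by auto
  have pu: "partner D u \<in> X" using cl u by blast
  have pune: "partner D u \<noteq> u" using p_ne ul by blast
  show "gX X e = (sw u (partner D u) \<circ> gX (X - {u, partner D u})) e"
  proof (cases "v \<in> X - {u, partner D u}")
    case True then show ?thesis unfolding comp_apply gv sw_def by auto
  next
    case False
    show ?thesis
    proof (cases "v = u")
      case True then show ?thesis unfolding comp_apply gv sw_def using u pune by auto
    next
      case False
      show ?thesis
      proof (cases "v = partner D u")
        case True then show ?thesis unfolding comp_apply gv sw_def using pu pune p_p[OF ul] by auto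
      next
        case False
        then have nX: "v \<notin> X" using \<open>v \<noteq> u\<close> \<open>\<not> v \<in> X - {u, partner D u}\<close> by blast
        have "partner D v \<noteq> u"
        proof
          assume "partner D v = u"
          then have "partner D (partner D v) = partner D u" by simp
          then show False using p_p[OF vl] False by simp
        qed
        moreover have "partner D v \<noteq> partner D u"
        proof
          assume "partner D v = partner D u"
          then have "partner D (partner D v) = partner D (partner D u)" by simp
          then show False using p_p[OF vl] p_p[OF ul] \<open>v \<noteq> u\<close> by simp
        qed
        ultimately show ?thesis unfolding comp_apply gv sw_def using nX by auto
      qed
    qed
  qed
qed

lemma B2:
  assumes "X \<subseteq> {0..<glen D}" "\<forall>x\<in>X. partner D x \<in> X"
  shows "num_orbits (seifert_step D) {0..<glen D} \<le> num_orbits (gX X) {0..<glen D} + card X div 2"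
  using assms
proof (induction "card X" arbitrary: X rule: less_induct)
  case less
  show ?case
  proof (cases "X = {}")
    case True then show ?thesis using g_empty by simp
  next
    case False
    then obtain u where u: "u \<in> X" by blast
    define X0 where "X0 = X - {u, partner D u}"
    have ul: "u < glen D" using u less.prems by auto
    have pu: "partner D u \<in> X" using less.prems u by blast
    have pune: "partner D u \<noteq> u" using p_ne ul by blast
    have finX: "finite X" using less.prems(1) finite_subset by blast
    have cX0: "card X0 = card X - 2"
      unfolding X0_def using u pu pune finX by (simp add: card_Diff_subset)
    have cX: "card X \<ge> 2"
    proof -
      have "{u, partner D u} \<subseteq> X" using u pu by blast
      then have "card {u, partner D u} \<le> card X" using finX by (rule card_mono[rotated])
      then show ?thesis using pune by simp
    qed
    have X0s: "X0 \<subseteq> {0..<glen D}" using less.prems unfolding X0_def by blast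
    have X0c: "\<forall>x\<in>X0. partner D x \<in> X0"
    proof
      fix x assume x: "x \<in> X0"
      then have xl: "x < glen D" using X0s by auto
      have "partner D x \<in> X" using x less.prems unfolding X0_def by blast
      moreover have "partner D x \<noteq> u" using x p_p[OF xl] unfolding X0_def by auto
      moreover have "partner D x \<noteq> partner D u"
      proof
        assume "partner D x = partner D u"
        then have "partner D (partner D x) = partner D (partner D u)" by simp
        then have "x = u" using p_p[OF xl] p_p[OF ul] by simp
        then show False using x unfolding X0_def by simp
      qed
      ultimately show "partner D x \<in> X0" unfolding X0_def by blast
    qed
    have IH: "num_orbits (seifert_step D) {0..<glen D} \<le> num_orbits (gX X0) {0..<glen D} + card X0 div 2"
      using less.hyps[of X0] cX0 cX X0s X0c by simp
    have pg: "perm_on (gX X0) {0..<glen D}" using g_perm X0s X0c by blast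
    have "num_orbits (gX X0) {0..<glen D} \<le> num_orbits (sw u (partner D u) \<circ> gX X0) {0..<glen D} + 1"
      using swap_orbits[OF _ pg, of u "partner D u"] ul p_lt[OF ul] by simp
    also have "sw u (partner D u) \<circ> gX X0 = gX X"
      unfolding X0_def using g_sw less.prems u by simp
    finally show ?thesis using IH cX0 cX by simp
  qed
qed

end


locale br = kd +
  fixes a k :: nat
  assumes k1: "1 \<le> k" and kN: "k < glen D" and aN: "a < glen D"
    and disj: "\<forall>b \<in> bridge_set D a k. partner D b \<notin> bridge_set D a k"
begin

abbreviation "N \<equiv> glen D"
abbreviation "p \<equiv> partner D"
abbreviation "B \<equiv> bridge_set D a k"
definition "R = B \<union> p ` B"
definition vv :: "nat \<Rightarrow> nat" where "vv t = (a + k + t) mod N"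
definition "Q = filter (\<lambda>t. p (vv t) \<notin> B) [0..<N-k]"
abbreviation "L \<equiv> remaining_visits D a k"
abbreviation "M \<equiv> length L"

lemma L_eq: "L = map vv Q"
  unfolding remaining_visits_def Q_def vv_def filter_map by (simp add: comp_def)

lemma M_eq: "M = length Q" by (simp add: L_eq)

lemma L_nth: "j < M \<Longrightarrow> L ! j = vv (Q ! j)"
  by (simp add: L_eq)

lemma vv_lt: "vv t < N" unfolding vv_def using Npos by simp

lemma vv_N: "vv (t + N) = vv t"
  unfolding vv_def by (simp add: add.assoc[symmetric])

lemma vv_Suc: "Suc (vv s) mod N = vv (Suc s)"
  unfolding vv_def by (simp add: mod_Suc_eq)

lemma B_def': "B = (\<lambda>t. (a + t) mod N) ` {..<k}"
  unfolding bridge_set_def by auto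

lemma B_sub: "B \<subseteq> {0..<N}"
  unfolding B_def' using Npos by auto

lemma card_B: "card B = k"
proof -
  have "inj_on (\<lambda>t. (a + t) mod N) {..<k}"
  proof (rule inj_onI)
    fix x y assume "x \<in> {..<k}" "y \<in> {..<k}" "(a + x) mod N = (a + y) mod N"
    then show "x = y" using mod_inj[of x N y a] kN by simp
  qed
  then show ?thesis unfolding B_def' by (simp add: card_image)
qed

lemma pB_sub: "p ` B \<subseteq> {0..<N}"
  using B_sub p_lt by auto

lemma R_sub: "R \<subseteq> {0..<N}"
  unfolding R_def using B_sub pB_sub by blast

lemma R_cl: "\<forall>x\<in>R. p x \<in> R"
proof
  fix x assume x: "x \<in> R"
  show "p x \<in> R"
  proof (cases "x \<in> B")
    case True then show ?thesis unfolding R_def by blast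
  next
    case False
    then obtain b where b: "b \<in> B" "x = p b" using x unfolding R_def by blast
    have "b < N" using b(1) B_sub by auto
    then have "p x = b" using b(2) p_p by simp
    then show ?thesis using b(1) unfolding R_def by blast
  qed
qed

lemma card_R: "card R = 2 * k"
proof -
  have "inj_on p B"
  proof (rule inj_onI)
    fix x y assume "x \<in> B" "y \<in> B" "p x = p y"
    then have "p (p x) = p (p y)" by simp
    moreover have "x < N" "y < N" using \<open>x \<in> B\<close> \<open>y \<in> B\<close> B_sub by auto
    ultimately show "x = y" using p_p by simp
  qed
  then have c2: "card (p ` B) = k" using card_B by (simp add: card_image)
  have "B \<inter> p ` B = {}" using disj by blast
  moreover have "finite B" by (rule finite_subset[OF B_sub]) simp
  moreover have "finite (p ` B)" by (rule finite_subset[OF pB_sub]) simp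
  ultimately have "card R = card B + card (p ` B)" unfolding R_def by (simp add: card_Un_disjoint)
  then show ?thesis using card_B c2 by simp
qed

lemma vv_B: assumes "t < N" shows "vv t \<in> B \<longleftrightarrow> N - k \<le> t"
proof
  assume "vv t \<in> B"
  then obtain t' where t': "t' < k" "vv t = (a + t') mod N" unfolding B_def' by auto
  show "N - k \<le> t"
  proof (rule ccontr)
    assume "\<not> N - k \<le> t"
    then have "k + t < N" by simp
    moreover have "t' < N" using t'(1) kN by simp
    moreover have "(a + (k + t)) mod N = (a + t') mod N" using t'(2) unfolding vv_def by (simp add: add.assoc)
    ultimately have "k + t = t'" using mod_inj by blast
    then show False using t'(1) by simp
  qed
next
  assume l: "N - k \<le> t"
  have eq: "a + k + t = (a + (t - (N - k))) + N" using l assms kN by simp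
  have "vv t = (a + (t - (N - k))) mod N" unfolding vv_def eq by (simp only: mod_add_self2)
  moreover have "t - (N - k) < k" using assms kN k1 by arith
  ultimately show "vv t \<in> B" unfolding B_def' by blast
qed

lemma Q_set: "set Q = {t. t < N - k \<and> p (vv t) \<notin> B}"
  unfolding Q_def by auto

lemma Q_sorted: "sorted_wrt (<) Q"
  unfolding Q_def by (rule sorted_wrt_filter) simp

lemma Q_less: "i < j \<Longrightarrow> j < M \<Longrightarrow> Q ! i < Q ! j"
  using sorted_wrt_nth_less[OF Q_sorted] M_eq by simp

lemma Q_less_rev: assumes "i < M" "j < M" "Q ! i < Q ! j" shows "i < j"
proof (rule ccontr)
  assume "\<not> i < j"
  then have "j = i \<or> j < i" by auto
  then show False using Q_less[of j i] assms by auto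
qed

lemma Q_in: "j < M \<Longrightarrow> Q ! j \<in> set Q"
  using M_eq by simp

lemma Q_bound: "j < M \<Longrightarrow> Q ! j < N - k"
  using Q_in Q_set by blast

lemma vv_R: assumes "t < N - k" shows "vv t \<in> R \<longleftrightarrow> t \<notin> set Q"
proof -
  have nB: "vv t \<notin> B" using vv_B[of t] assms by simp
  have "vv t \<in> p ` B \<longleftrightarrow> p (vv t) \<in> B"
  proof
    assume "vv t \<in> p ` B"
    then obtain b where "b \<in> B" "vv t = p b" by blast
    moreover have "b < N" using \<open>b \<in> B\<close> B_sub by auto
    ultimately show "p (vv t) \<in> B" using p_p by simp
  next
    assume "p (vv t) \<in> B"
    moreover have "p (p (vv t)) = vv t" using p_p vv_lt by simp
    ultimately show "vv t \<in> p ` B" by (metis image_eqI)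
  qed
  then show ?thesis unfolding R_def Q_set using nB assms by auto
qed

lemma vv_inj: "inj_on vv {..<N}"
proof (rule inj_onI)
  fix x y assume "x \<in> {..<N}" "y \<in> {..<N}" "vv x = vv y"
  then show "x = y" using mod_inj[of x N y "a+k"] unfolding vv_def by simp
qed

lemma vv_surj: "vv ` {..<N} = {..<N}"
proof -
  note inj = vv_inj
  have "vv ` {..<N} \<subseteq> {..<N}" using vv_lt by auto
  moreover have "card (vv ` {..<N}) = card {..<N}" using inj by (simp add: card_image)
  ultimately show ?thesis by (simp add: card_subset_eq)
qed

lemma vv_onto: assumes "x < N" obtains t where "t < N" "vv t = x"
  using assms vv_surj by (metis imageE lessThan_iff)

lemma L_set: "set L = {0..<N} - R"
proof
  show "set L \<subseteq> {0..<N} - R"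
  proof
    fix x assume "x \<in> set L"
    then obtain t where t: "t \<in> set Q" "x = vv t" unfolding L_eq by auto
    then have tl: "t < N - k" using Q_set by auto
    have "vv t \<notin> R" using vv_R[OF tl] t(1) by simp
    then show "x \<in> {0..<N} - R" using t(2) vv_lt[of t] by simp
  qed
  show "{0..<N} - R \<subseteq> set L"
  proof
    fix x assume x: "x \<in> {0..<N} - R"
    have xN: "x < N" using x by simp
    obtain t where t: "t < N" "vv t = x" using vv_onto[OF xN] by blast
    have xR: "x \<notin> R" using x by simp
    have "vv t \<notin> B" using xR t(2) unfolding R_def by blast
    then have tl: "t < N - k" using vv_B[OF t(1)] by simp
    then have "t \<in> set Q" using vv_R[OF tl] xR t(2) by simp
    then show "x \<in> set L" unfolding L_eq using t by auto
  qed
qed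

lemma L_distinct: "distinct L"
proof -
  have "distinct Q" unfolding Q_def by simp
  moreover have "inj_on vv (set Q)"
  proof (rule inj_on_subset[OF vv_inj])
    show "set Q \<subseteq> {..<N}"
    proof
      fix t assume "t \<in> set Q"
      then have "t < N - k" unfolding Q_set by simp
      then show "t \<in> {..<N}" by simp
    qed
  qed
  ultimately show ?thesis unfolding L_eq by (simp add: distinct_map)
qed

lemma M_val: "M = N - 2 * k" and twok: "2 * k \<le> N"
proof -
  have "M = card (set L)" using L_distinct by (simp add: distinct_card)
  also have "\<dots> = card ({0..<N} - R)" using L_set by simp
  also have "\<dots> = N - 2 * k" using R_sub card_R by (simp add: card_Diff_subset finite_subset)
  finally show "M = N - 2 * k" .
  have "card R \<le> card {0..<N}" using R_sub card_mono[of "{0..<N}" R] by simp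
  then show "2 * k \<le> N" using card_R by simp
qed

end


context br
begin

definition kp :: "nat \<Rightarrow> nat" where
  "kp e = (THE m'. m' < M \<and> L ! m' = p (L ! e))"

definition kst :: "nat \<Rightarrow> nat" where
  "kst = kseifert_step (remove_bridge D a k)"

lemma kst_eq: "kst e = (if e < M then Suc (kp e) else 0)"
  unfolding kst_def kseifert_step_def remove_bridge_def Let_def kp_def by simp

lemma kp_prop: assumes e: "e < M" shows "kp e < M \<and> L ! (kp e) = p (L ! e)"
proof -
  have Le: "L ! e \<in> set L" using e by simp
  then have Le2: "L ! e < N" "L ! e \<notin> R" using L_set by auto
  have pl: "p (L ! e) < N" using p_lt[OF Le2(1)] .
  have "p (L ! e) \<notin> R"
  proof
    assume "p (L ! e) \<in> R"
    then have "p (p (L ! e)) \<in> R" using R_cl by blast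
    then show False using p_p[OF Le2(1)] Le2(2) by simp
  qed
  then have "p (L ! e) \<in> set L" using L_set pl by simp
  then obtain m where m: "m < M" "L ! m = p (L ! e)" by (metis in_set_conv_nth)
  have "\<exists>!m'. m' < M \<and> L ! m' = p (L ! e)"
  proof (rule ex1I[of _ m])
    show "m < M \<and> L ! m = p (L ! e)" using m by simp
    fix m' assume "m' < M \<and> L ! m' = p (L ! e)"
    then show "m' = m" using nth_eq_iff_index_eq[OF L_distinct, of m' m] m by simp
  qed
  then show ?thesis unfolding kp_def by (rule theI')
qed

definition phi :: "nat \<Rightarrow> nat" where
  "phi j = (if j < M then vv (Q ! j + N - 1) else vv (N - k - 1))"

abbreviation "g \<equiv> gX R"

lemma g_vv: "g (vv s) = (if vv (Suc s) \<in> R then vv (Suc s) else p (vv (Suc s)))"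
  unfolding gX_def vv_Suc by simp

lemma run: "(\<forall>i<d. vv (s + i + 1) \<in> R) \<Longrightarrow> (g^^d) (vv s) = vv (s + d)"
proof (induction d)
  case 0 then show ?case by simp
next
  case (Suc d)
  have h: "(g^^d) (vv s) = vv (s + d)" using Suc by simp
  have "vv (Suc (s + d)) \<in> R" using Suc.prems by simp
  then have "g (vv (s + d)) = vv (Suc (s + d))" using g_vv[of "s+d"] by simp
  then show ?case using h by simp
qed

lemma vv_pred: "0 < x \<Longrightarrow> vv (x + N - 1) = vv (x - 1)"
proof -
  assume "0 < x"
  then have "x + N - 1 = (x - 1) + N" by simp
  then show ?thesis using vv_N by simp
qed

lemma Q_notin_between:
  assumes "m < M" "Q ! m < y" "Suc m < M \<Longrightarrow> y < Q ! (Suc m)"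
  shows "y \<notin> set Q"
proof
  assume "y \<in> set Q"
  then obtain j where j: "j < M" "Q ! j = y" using M_eq by (metis in_set_conv_nth)
  have "m < j" using Q_less_rev[OF assms(1) j(1)] j(2) assms(2) by simp
  then have "Suc m \<le> j" by simp
  show False
  proof (cases "Suc m < M")
    case True
    then have "y < Q ! (Suc m)" using assms(3) by simp
    then have "j < Suc m" using Q_less_rev[OF j(1) True] j(2) by simp
    then show False using \<open>Suc m \<le> j\<close> by simp
  next
    case False then show False using \<open>Suc m \<le> j\<close> j(1) by simp
  qed
qed

lemma g_phi: assumes t: "t < M" shows "g (phi t) = vv (Q ! kp t)"
proof -
  have ph: "phi t = vv (Q ! t + N - 1)" unfolding phi_def using t by simp
  have s: "Suc (Q ! t + N - 1) = Q ! t + N" using Npos by simp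
  have vq: "vv (Q ! t + N) = L ! t" using vv_N L_nth[OF t] by simp
  have nR: "L ! t \<notin> R" using L_set t by (metis Diff_iff nth_mem)
  have "g (phi t) = p (L ! t)" unfolding ph g_vv s vq using nR by simp
  also have "\<dots> = L ! kp t" using kp_prop[OF t] by simp
  also have "\<dots> = vv (Q ! kp t)" using kp_prop[OF t] L_nth[of "kp t"] by blast
  finally show ?thesis .
qed

lemma step_in_orb:
  assumes "x' = (g^^d) (g y)" shows "x' \<in> orb g y"
proof -
  have "x' = (g^^Suc d) y" using assms by (simp add: funpow_Suc_right del: funpow.simps)
  then show ?thesis using orb_funpow[of "Suc d" g y] by simp
qed

lemma stepc: assumes t: "t \<le> M" shows "phi (kst t) \<in> orb g (phi t)"
proof (cases "t < M")
  case True
  define m where "m = kp t"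
  have mM: "m < M" using kp_prop[OF True] unfolding m_def by simp
  have kt: "kst t = Suc m" unfolding kst_eq m_def using True by simp
  have gt: "g (phi t) = vv (Q ! m)" unfolding m_def using g_phi[OF True] .
  have qm: "Q ! m < N - k" using Q_bound[OF mM] .
  show ?thesis
  proof (cases "Suc m < M")
    case True
    have lt: "Q ! m < Q ! Suc m" using Q_less[OF _ True] by simp
    have qs: "Q ! Suc m < N - k" using Q_bound[OF True] .
    define d where "d = Q ! Suc m - 1 - Q ! m"
    have cond: "\<forall>i<d. vv (Q ! m + i + 1) \<in> R"
    proof (intro allI impI)
      fix i assume "i < d"
      then have y1: "Q ! m < Q ! m + i + 1" "Q ! m + i + 1 < Q ! Suc m" unfolding d_def using lt by auto
      have "Q ! m + i + 1 \<notin> set Q" using Q_notin_between[OF mM y1(1)] y1(2) by simp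
      moreover have "Q ! m + i + 1 < N - k" using y1(2) qs by simp
      ultimately show "vv (Q ! m + i + 1) \<in> R" using vv_R by simp
    qed
    have "(g^^d) (g (phi t)) = vv (Q ! m + d)" using gt run[OF cond] by simp
    also have "Q ! m + d = Q ! Suc m - 1" unfolding d_def using lt by simp
    also have "vv (Q ! Suc m - 1) = phi (kst t)"
      unfolding kt phi_def using True vv_pred[of "Q ! Suc m"] lt by simp
    finally show ?thesis using step_in_orb by metis
  next
    case False
    then have sM: "Suc m = M" using mM by simp
    define d where "d = N - k - 1 - Q ! m"
    have cond: "\<forall>i<d. vv (Q ! m + i + 1) \<in> R"
    proof (intro allI impI)
      fix i assume "i < d"
      then have y1: "Q ! m < Q ! m + i + 1" "Q ! m + i + 1 < N - k" unfolding d_def using qm by auto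
      have "Q ! m + i + 1 \<notin> set Q" using Q_notin_between[OF mM y1(1)] sM by simp
      then show "vv (Q ! m + i + 1) \<in> R" using vv_R y1(2) by simp
    qed
    have "(g^^d) (g (phi t)) = vv (Q ! m + d)" using gt run[OF cond] by simp
    also have "Q ! m + d = N - k - 1" unfolding d_def using qm by simp
    also have "vv (N - k - 1) = phi (kst t)"
      unfolding kt phi_def using sM by simp
    finally show ?thesis using step_in_orb by metis
  qed
next
  case False
  then have tM: "t = M" using t by simp
  have kt: "kst t = 0" unfolding kst_eq using tM by simp
  show ?thesis
  proof (cases "M = 0")
    case True
    then show ?thesis unfolding kt using tM orb_self by simp
  next
    case False
    then have M0: "0 < M" by simp
    have q0: "Q ! 0 < N - k" using Q_bound[OF M0] .
    define d where "d = Q ! 0 + k"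
    have cond: "\<forall>i<d. vv ((N - k - 1) + i + 1) \<in> R"
    proof (intro allI impI)
      fix i assume id: "i < d"
      have e: "(N - k - 1) + i + 1 = N - k + i" using kN by simp
      show "vv ((N - k - 1) + i + 1) \<in> R"
      proof (cases "i < k")
        case True
        then have "vv (N - k + i) \<in> B" using vv_B[of "N - k + i"] kN by simp
        then show ?thesis unfolding e R_def by blast
      next
        case False
        then have "N - k + i = (i - k) + N" using kN by simp
        then have vi: "vv (N - k + i) = vv (i - k)" using vv_N by simp
        have ik: "i - k < Q ! 0" using id False unfolding d_def by simp
        have "i - k \<notin> set Q"
        proof
          assume "i - k \<in> set Q"
          then obtain j where j: "j < M" "Q ! j = i - k" using M_eq by (metis in_set_conv_nth)
          then have "j < 0" using Q_less_rev[OF j(1) M0] ik by simp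
          then show False by simp
        qed
        moreover have "i - k < N - k" using ik q0 by simp
        ultimately have "vv (i - k) \<in> R" using vv_R by simp
        then show ?thesis unfolding e vi .
      qed
    qed
    have "(g^^d) (vv (N - k - 1)) = vv (N - k - 1 + d)" using run[OF cond] .
    also have "N - k - 1 + d = Q ! 0 + N - 1" unfolding d_def using kN by simp
    finally have "(g^^d) (phi t) = phi (kst t)" unfolding phi_def kt using tM M0 by simp
    then show ?thesis using orb_funpow[of d g "phi t"] by simp
  qed
qed

end


context br
begin

lemma g_permR: "perm_on g {0..<N}"
  using g_perm[OF R_sub R_cl] .

lemma phi_lt: "phi t < N"
  unfolding phi_def using vv_lt by simp

lemma surjd: assumes x: "x < N" shows "\<exists>t\<in>{0..M}. phi t \<in> orb g x"
proof (cases "\<exists>n. Suc ((g^^n) x) mod N \<notin> R")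
  case True
  then obtain n where n: "Suc ((g^^n) x) mod N \<notin> R" by blast
  define y where "y = (g^^n) x"
  have yl: "y < N"
    using funpow_in[of "{0..<N}" g x n] g_permR x unfolding perm_on_def y_def by simp
  define w where "w = Suc y mod N"
  have wl: "w < N" unfolding w_def using Npos by simp
  have "w \<in> set L" using L_set wl n unfolding w_def y_def by simp
  then obtain j where j: "j < M" "L ! j = w" by (metis in_set_conv_nth)
  have ph: "phi j = vv (Q ! j + N - 1)" unfolding phi_def using j by simp
  have s: "Suc (Q ! j + N - 1) = Q ! j + N" using Npos by simp
  have "Suc (phi j) mod N = vv (Q ! j + N)" unfolding ph vv_Suc s ..
  also have "\<dots> = w" using vv_N L_nth[OF j(1)] j(2) by simp
  finally have "Suc (phi j) mod N = Suc y mod N" unfolding w_def .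
  then have "phi j = y" using nxt_inj[of "phi j" y] phi_lt yl by simp
  then have "phi j \<in> orb g x" unfolding y_def using orb_funpow by metis
  moreover have "j \<in> {0..M}" using j by simp
  ultimately show ?thesis by blast
next
  case False
  then have allR: "\<And>n. Suc ((g^^n) x) mod N \<in> R" by blast
  have it: "(g^^n) x = (x + n) mod N" for n
  proof (induction n)
    case 0 then show ?case using x by simp
  next
    case (Suc n)
    have "Suc ((g^^n) x) mod N \<in> R" by (rule allR)
    then have "(g^^Suc n) x = Suc ((g^^n) x) mod N" unfolding gX_def by simp
    also have "\<dots> = (x + Suc n) mod N" unfolding Suc by (simp add: mod_Suc_eq)
    finally show ?case .
  qed
  define n0 where "n0 = phi M + N - x"
  have "x + n0 = phi M + N" unfolding n0_def using x by simp
  then have "(g^^n0) x = phi M" using it[of n0] phi_lt[of M] by simp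
  then have "phi M \<in> orb g x" using orb_funpow by metis
  then show ?thesis by auto
qed

lemma orbits_le: "num_orbits g {0..<N} \<le> num_orbits kst {0..M}"
proof (rule induced[OF _ g_permR])
  show "finite {0..<N}" by simp
  show "finite {0..M}" by simp
  show "\<forall>t\<in>{0..M}. kst t \<in> {0..M}"
  proof
    fix t assume t: "t \<in> {0..M}"
    show "kst t \<in> {0..M}"
    proof (cases "t < M")
      case True then show ?thesis unfolding kst_eq using kp_prop[OF True] by simp
    next
      case False then show ?thesis unfolding kst_eq by simp
    qed
  qed
  show "\<forall>t\<in>{0..M}. phi t \<in> {0..<N}" using phi_lt by simp
  show "\<forall>t\<in>{0..M}. phi (kst t) \<in> orb g (phi t)" using stepc by simp
  show "\<forall>x\<in>{0..<N}. \<exists>t\<in>{0..M}. phi t \<in> orb g x" using surjd by simp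
qed

lemma final: "knot_genus D \<ge> knotoid_genus (remove_bridge D a k)"
proof -
  define s where "s = num_orbits (seifert_step D) {0..<N}"
  define c where "c = num_orbits kst {0..M}"
  have sc: "seifert_circles D = s" unfolding seifert_circles_def s_def using Npos by simp
  have s_le: "s \<le> c + k"
  proof -
    have "s \<le> num_orbits g {0..<N} + card R div 2"
      unfolding s_def using B2[OF R_sub R_cl] .
    also have "card R div 2 = k" using card_R by simp
    finally show ?thesis using orbits_le unfolding c_def by simp
  qed
  have c1: "c \<ge> 1"
  proof -
    have "orb kst 0 \<in> orb kst ` {0..M}" by simp
    then have "orb kst ` {0..M} \<noteq> {}" by blast
    moreover have "finite (orb kst ` {0..M})" by simp
    ultimately show ?thesis unfolding c_def num_orbits_orb by (simp add: card_gt_0_iff Suc_leI)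
  qed
  have kl: "klen (remove_bridge D a k) = M"
    unfolding remove_bridge_def Let_def by simp
  have kc: "kseifert_circles (remove_bridge D a k) = c - 1"
    unfolding kseifert_circles_def c_def kst_def kl ..
  have Md: "M div 2 = N div 2 - k" using M_val twok by simp
  have kle: "k \<le> N div 2" using twok by simp
  have "knotoid_genus (remove_bridge D a k) = (real (N div 2 - k) - real (c - 1)) / 2"
    unfolding knotoid_genus_def kl kc Md ..
  also have "\<dots> = (real (N div 2) - real k - real c + 1) / 2"
    using kle c1 by (simp add: of_nat_diff)
  also have "\<dots> \<le> (real (N div 2) - real s + 1) / 2"
    using s_le by simp
  also have "\<dots> = knot_genus D"
    unfolding knot_genus_def crossings_def sc ..
  finally show ?thesis .
qed

end

theorem mainTheorem4:
  assumes "knot_diagram D"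
    and "over_bridge D a k \<or> under_bridge D a k"
  shows "knot_genus D \<ge> knotoid_genus (remove_bridge D a k)"
proof -
  have pr: "pairing (glen D) (partner D)" and ov: "\<forall>i < glen D. over D (partner D i) = (\<not> over D i)"
    using assms(1) unfolding knot_diagram_def by blast+
  have k1: "1 \<le> k" and kN: "k < glen D" and aN: "a < glen D"
    using assms(2) unfolding over_bridge_def under_bridge_def by blast+
  have Npos: "0 < glen D" using kN by simp
  have disj: "\<forall>b \<in> bridge_set D a k. partner D b \<notin> bridge_set D a k"
  proof (intro ballI notI)
    fix b assume b: "b \<in> bridge_set D a k" and pb: "partner D b \<in> bridge_set D a k"
    obtain t where t: "t < k" "b = (a + t) mod glen D" using b unfolding bridge_set_def by blast
    obtain t' where t': "t' < k" "partner D b = (a + t') mod glen D" using pb unfolding bridge_set_def by blast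
    have bl: "b < glen D" using t(2) Npos by simp
    have e: "over D (partner D b) = (\<not> over D b)" using ov bl by blast
    show False
    proof (cases "over_bridge D a k")
      case True
      then have "over D b" "over D (partner D b)" using t t' unfolding over_bridge_def by auto
      then show False using e by simp
    next
      case False
      then have "under_bridge D a k" using assms(2) by simp
      then have "\<not> over D b" "\<not> over D (partner D b)" using t t' unfolding under_bridge_def by auto
      then show False using e by simp
    qed
  qed
  interpret br D a k
    by unfold_locales (use pr Npos k1 kN aN disj in auto)
  show ?thesis by (rule final)
qed


end
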